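(* Let $v:\mathbb{R}^d\times(0,\tau)\to\mathbb{R}^d$ satisfy the standing assumption below, let $\phi^t$ denote the flow map of $\dot x=v(x,t)$, and let $\Omega\subset\mathbb{R}^d$ be compact. Then for every $\varepsilon>0$ there exist $N\in\mathbb{Z}^+$ and piecewise smooth functions $a_i:[0,\tau]\to\mathbb{R}^d$, $w_i:[0,\tau]\to\mathbb{R}^d$, $b_i:[0,\tau]\to\mathbb{R}$ ($i=1,\dots,N$) such that, with $$\tilde v(x,t)=\sum_{i=1}^N a_i(t)\tanh(w_i(t)\cdot x+b_i(t)),$$ the flow map $\tilde\phi^t$ of $\dot x=\tilde v(x,t)$ satisfies $\|\phi^t(x)-\tilde\phi^t(x)\|\le\varepsilon$ for all $x\in\Omega$ and $t\in[0,\tau]$.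
   Context: Standing assumption on $v$: $v(x,t)$ is Lipschitz continuous in $x\in\mathbb{R}^d$ and piecewise smooth in $t\in(0,\tau)$, and on each piece $v$ is continuous in $(x,t)$. The flow map $\phi^t$ sends an initial value $x_0$ to the solution value $x(t)$. *)

theory Defs
  imports "HOL-Analysis.Analysis"
begin

definition smooth_on :: "real set \<Rightarrow> (real \<Rightarrow> 'b::real_normed_vector) \<Rightarrow> bool" where
  "smooth_on S f \<longleftrightarrow>
     (\<exists>D :: nat \<Rightarrow> real \<Rightarrow> 'b. (\<forall>t\<in>S. D 0 t = f t) \<and>
        (\<forall>n. \<forall>t\<in>S. (D n has_vector_derivative D (Suc n) t) (at t)))"

definition consecutive :: "real \<Rightarrow> real set \<Rightarrow> real \<Rightarrow> real \<Rightarrow> bool" where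
  "consecutive \<tau> K s t \<longleftrightarrow>
     s \<in> insert 0 (insert \<tau> K) \<and> t \<in> insert 0 (insert \<tau> K) \<and> s < t \<and> {s<..<t} \<inter> K = {}"

definition piecewise_smooth_fun :: "real \<Rightarrow> (real \<Rightarrow> 'b::real_normed_vector) \<Rightarrow> bool" where
  "piecewise_smooth_fun \<tau> f \<longleftrightarrow>
     (\<exists>K. finite K \<and> K \<subseteq> {0<..<\<tau>} \<and>
        (\<forall>s t. consecutive \<tau> K s t \<longrightarrow>
           smooth_on {s<..<t} f \<and>
           (\<exists>g. continuous_on {s..t} g \<and> (\<forall>r\<in>{s<..<t}. g r = f r))))"

definition standing_assumption :: "real \<Rightarrow> ('a::euclidean_space \<Rightarrow> real \<Rightarrow> 'a) \<Rightarrow> bool" where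
  "standing_assumption \<tau> v \<longleftrightarrow>
     (\<exists>L. \<forall>t\<in>{0<..<\<tau>}. \<forall>x y. norm (v x t - v y t) \<le> L * norm (x - y)) \<and>
     (\<exists>K. finite K \<and> K \<subseteq> {0<..<\<tau>} \<and>
        (\<forall>s t. consecutive \<tau> K s t \<longrightarrow>
           (\<forall>x. smooth_on {s<..<t} (v x)) \<and>
           (\<exists>g. continuous_on (UNIV \<times> {s..t}) (\<lambda>(x, r). g x r) \<and>
                (\<forall>x. \<forall>r\<in>{s<..<t}. g x r = v x r))))"

definition is_flow :: "real \<Rightarrow> ('a::euclidean_space \<Rightarrow> real \<Rightarrow> 'a) \<Rightarrow> (real \<Rightarrow> 'a \<Rightarrow> 'a) \<Rightarrow> bool" where
  "is_flow \<tau> v \<phi> \<longleftrightarrow>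
     (\<forall>x0. continuous_on {0..\<tau>} (\<lambda>t. \<phi> t x0) \<and>
        (\<forall>t\<in>{0..\<tau>}. ((\<lambda>s. v (\<phi> s x0) s) has_integral (\<phi> t x0 - x0)) {0..t}))"

end

theory Submission
  imports Defs
begin


definition netL :: "('c::real_vector \<times> 'b::real_inner \<times> real) list \<Rightarrow> 'b \<Rightarrow> 'c" where
  "netL l z = (\<Sum>(a,w,b)\<leftarrow>l. tanh (w \<bullet> z + b) *\<^sub>R a)"

definition approx :: "'b::real_inner set \<Rightarrow> ('b \<Rightarrow> 'c::real_normed_vector) \<Rightarrow> bool" where
  "approx S f \<longleftrightarrow> (\<forall>\<delta>>0. \<exists>l. \<forall>z\<in>S. norm (f z - netL l z) \<le> \<delta>)"

lemma netL_Nil[simp]: "netL [] z = 0" by (simp add: netL_def)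
lemma netL_Cons[simp]: "netL ((a,w,b)#l) z = tanh (w \<bullet> z + b) *\<^sub>R a + netL l z"
  by (simp add: netL_def)
lemma netL_append[simp]: "netL (l1 @ l2) z = netL l1 z + netL l2 z"
  by (simp add: netL_def)

lemma netL_map_scale:
  "netL (map (\<lambda>(a,w,b). ((c::real) * a, w, b)) l) z = c * netL l z"
  by (induction l) (auto simp: algebra_simps)

lemma netL_map_vec:
  "netL (map (\<lambda>(a,w,b). (a *\<^sub>R e, w, b)) l) z = netL l z *\<^sub>R e"
  by (induction l) (auto simp: algebra_simps)

lemma approx_add:
  assumes "approx S f" "approx S g"
  shows "approx S (\<lambda>z. f z + g z)"
  unfolding approx_def
proof (intro allI impI)
  fix d :: real assume d: "d > 0"
  obtain l1 where l1: "\<forall>z\<in>S. norm (f z - netL l1 z) \<le> d/2" using assms(1) d unfolding approx_def by (meson half_gt_zero)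
  obtain l2 where l2: "\<forall>z\<in>S. norm (g z - netL l2 z) \<le> d/2" using assms(2) d unfolding approx_def by (meson half_gt_zero)
  show "\<exists>l. \<forall>z\<in>S. norm (f z + g z - netL l z) \<le> d"
  proof (intro exI ballI)
    fix z assume z: "z \<in> S"
    have "norm (f z + g z - netL (l1@l2) z) = norm ((f z - netL l1 z) + (g z - netL l2 z))"
      by (simp add: algebra_simps)
    also have "\<dots> \<le> norm (f z - netL l1 z) + norm (g z - netL l2 z)" by (rule norm_triangle_ineq)
    also have "\<dots> \<le> d" using l1 l2 z by fastforce
    finally show "norm (f z + g z - netL (l1@l2) z) \<le> d" .
  qed
qed

lemma approx_zero: "approx S (\<lambda>z. 0)"
  unfolding approx_def by (intro allI impI exI[of _ "[]"]) auto

lemma approx_sum: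
  assumes "finite I" "\<And>i. i \<in> I \<Longrightarrow> approx S (f i)"
  shows "approx S (\<lambda>z. \<Sum>i\<in>I. f i z)"
  using assms by (induction I rule: finite_induct) (auto intro: approx_add approx_zero)

lemma approx_scale:
  fixes f :: "'b::real_inner \<Rightarrow> real"
  assumes "approx S f"
  shows "approx S (\<lambda>z. c * f z)"
proof (cases "c = 0")
  case True then show ?thesis using approx_zero by simp
next
  case False
  show ?thesis unfolding approx_def
  proof (intro allI impI)
    fix d :: real assume d: "d > 0"
    then have "d / \<bar>c\<bar> > 0" using False by simp
    then obtain l where l: "\<forall>z\<in>S. norm (f z - netL l z) \<le> d / \<bar>c\<bar>" using assms unfolding approx_def by blast
    show "\<exists>l. \<forall>z\<in>S. norm (c * f z - netL l z) \<le> d"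
    proof (intro exI ballI)
      fix z assume z: "z \<in> S"
      have "c * f z - netL (map (\<lambda>(a,w,b). (c * a, w, b)) l) z = c * (f z - netL l z)"
        using netL_map_scale[of c l z] by (simp add: algebra_simps)
      then have "norm (c * f z - netL (map (\<lambda>(a,w,b). (c * a, w, b)) l) z) = \<bar>c\<bar> * norm (f z - netL l z)"
        by (simp add: abs_mult)
      also have "\<dots> \<le> \<bar>c\<bar> * (d / \<bar>c\<bar>)" using l z by (intro mult_left_mono) auto
      also have "\<dots> = d" using False by simp
      finally show "norm (c * f z - netL (map (\<lambda>(a,w,b). (c * a, w, b)) l) z) \<le> d" .
    qed
  qed
qed

lemma approx_vec:
  fixes f :: "'b::real_inner \<Rightarrow> real"
  assumes "approx S f"
  shows "approx S (\<lambda>z. f z *\<^sub>R (e::'c::real_normed_vector))"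
proof (cases "e = 0")
  case True then show ?thesis using approx_zero by simp
next
  case False
  show ?thesis unfolding approx_def
  proof (intro allI impI)
    fix d :: real assume d: "d > 0"
    then have "d / norm e > 0" using False by simp
    then obtain l where l: "\<forall>z\<in>S. norm (f z - netL l z) \<le> d / norm e" using assms unfolding approx_def by blast
    show "\<exists>l. \<forall>z\<in>S. norm (f z *\<^sub>R e - netL l z) \<le> d"
    proof (intro exI ballI)
      fix z assume z: "z \<in> S"
      have "f z *\<^sub>R e - netL (map (\<lambda>(a,w,b). (a *\<^sub>R e, w, b)) l) z = (f z - netL l z) *\<^sub>R e"
        using netL_map_vec[of e l z] by (simp add: algebra_simps)
      then have "norm (f z *\<^sub>R e - netL (map (\<lambda>(a,w,b). (a *\<^sub>R e, w, b)) l) z) = norm (f z - netL l z) * norm e"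
        by simp
      also have "\<dots> \<le> (d / norm e) * norm e" using l z by (intro mult_right_mono) auto
      also have "\<dots> = d" using False by simp
      finally show "norm (f z *\<^sub>R e - netL (map (\<lambda>(a,w,b). (a *\<^sub>R e, w, b)) l) z) \<le> d" .
    qed
  qed
qed

lemma approx_limit:
  assumes "\<And>d. d > 0 \<Longrightarrow> \<exists>g. approx S g \<and> (\<forall>z\<in>S. norm (f z - g z) \<le> d)"
  shows "approx S f"
  unfolding approx_def
proof (intro allI impI)
  fix d :: real assume d: "d > 0"
  obtain g where g: "approx S g" "\<forall>z\<in>S. norm (f z - g z) \<le> d/2" using assms[of "d/2"] d by auto
  obtain l where l: "\<forall>z\<in>S. norm (g z - netL l z) \<le> d/2" using g(1) d unfolding approx_def by (meson half_gt_zero)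
  show "\<exists>l. \<forall>z\<in>S. norm (f z - netL l z) \<le> d"
  proof (intro exI ballI)
    fix z assume z: "z \<in> S"
    have "f z - netL l z = (f z - g z) + (g z - netL l z)" by simp
    then have "norm (f z - netL l z) \<le> norm (f z - g z) + norm (g z - netL l z)" by (metis norm_triangle_ineq)
    also have "\<dots> \<le> d" using g(2) l z by fastforce
    finally show "norm (f z - netL l z) \<le> d" .
  qed
qed

lemma exp_tanh_bound:
  fixes u c :: real
  shows "\<bar>exp (2*u) - exp (2*c) * ((1 + tanh (u - c)) / 2)\<bar> \<le> exp (4*u - 2*c)"
proof -
  define X where "X = exp (2*u)"
  define Y where "Y = exp (2*c)"
  have X: "X > 0" and Y: "Y > 0" by (auto simp: X_def Y_def)
  have e: "exp (- 2 * (u - c)) = Y / X" by (simp add: X_def Y_def exp_diff[symmetric] algebra_simps)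
  have a1: "1 - Y/X = (X - Y) / X" and a2: "1 + Y/X = (X + Y) / X" using X by (auto simp: field_simps)
  have t1: "(1 - Y/X) / (1 + Y/X) = (X - Y) / (X + Y)"
    unfolding a1 a2 using X by simp
  have t: "(1 + tanh (u - c)) / 2 = X / (X + Y)"
    unfolding tanh_real_altdef e t1 using X Y by (simp add: field_simps)
  have XY: "X + Y \<noteq> 0" using X Y by simp
  have "X - Y * (X / (X + Y)) = X*X / (X + Y)"
    using XY by (simp add: field_simps)
  then have "exp (2*u) - exp (2*c) * ((1 + tanh (u - c)) / 2) = X*X / (X + Y)"
    unfolding t X_def[symmetric] Y_def[symmetric] .
  moreover have "X*X / (X+Y) \<le> X*X / Y" using X Y by (intro divide_left_mono) auto
  moreover have "X*X / Y = exp (4*u - 2*c)" by (simp add: X_def Y_def exp_diff exp_add[symmetric])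
  moreover have "X*X/(X+Y) \<ge> 0" using X Y by simp
  ultimately show ?thesis by (metis abs_of_nonneg)
qed

lemma approx_exp:
  fixes S :: "'b::euclidean_space set"
  assumes "compact S"
  shows "approx S (\<lambda>z. exp (w \<bullet> z))"
  unfolding approx_def
proof (intro allI impI)
  fix d :: real assume d: "d > 0"
  obtain B where B: "\<And>z. z \<in> S \<Longrightarrow> norm z \<le> B"
    using compact_imp_bounded[OF assms] bounded_iff by blast
  define M where "M = norm w * B"
  define c where "c = M - ln d / 2"
  define Y where "Y = exp (2*c)"
  let ?l = "[(Y/2/tanh 1, 0::'b, 1::real), (Y/2, (1/2) *\<^sub>R w, - c)]"
  show "\<exists>l. \<forall>z\<in>S. norm (exp (w \<bullet> z) - netL l z) \<le> d"
  proof (intro exI ballI)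
    fix z assume z: "z \<in> S"
    define u where "u = (w \<bullet> z) / 2"
    have "w \<bullet> z \<le> M" unfolding M_def
      using Cauchy_Schwarz_ineq2[of w z] B[OF z] by (smt (verit) mult_left_mono norm_ge_zero abs_le_iff)
    then have u: "4*u - 2*c \<le> ln d" unfolding u_def c_def by simp
    have "netL ?l z = Y/2 + Y/2 * tanh (u - c)"
      by (simp add: u_def inner_scaleR_left)
    also have "\<dots> = exp (2*c) * ((1 + tanh (u - c)) / 2)" by (simp add: Y_def field_simps)
    finally have n: "netL ?l z = exp (2*c) * ((1 + tanh (u - c)) / 2)" .
    have "norm (exp (w \<bullet> z) - netL ?l z) = \<bar>exp (2*u) - exp (2*c) * ((1 + tanh (u - c)) / 2)\<bar>"
      unfolding n u_def by simp
    also have "\<dots> \<le> exp (4*u - 2*c)" by (rule exp_tanh_bound)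
    also have "\<dots> \<le> exp (ln d)" using u by simp
    also have "\<dots> = d" using d by simp
    finally show "norm (exp (w \<bullet> z) - netL ?l z) \<le> d" .
  qed
qed



inductive_set expspan :: "('b::euclidean_space \<Rightarrow> real) set" where
  gen: "(\<lambda>z. exp (w \<bullet> z)) \<in> expspan"
| add: "f \<in> expspan \<Longrightarrow> g \<in> expspan \<Longrightarrow> (\<lambda>z. f z + g z) \<in> expspan"
| scale: "f \<in> expspan \<Longrightarrow> (\<lambda>z. c * f z) \<in> expspan"

lemma expspan_mult_gen:
  assumes "g \<in> expspan" shows "(\<lambda>z. exp (w \<bullet> z) * g z) \<in> expspan"
  using assms
proof (induction g rule: expspan.induct)
  case (gen w')
  have "(\<lambda>z. exp ((w + w') \<bullet> z)) \<in> expspan" by (rule expspan.gen)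
  then show ?case by (simp add: inner_add_left exp_add)
next
  case (add f g)
  then show ?case using expspan.add[OF add.IH] by (simp add: distrib_left)
next
  case (scale f c)
  then show ?case using expspan.scale[OF scale.IH, of c] by (simp add: algebra_simps)
qed

lemma expspan_mult:
  assumes "f \<in> expspan" "g \<in> expspan" shows "(\<lambda>z. f z * g z) \<in> expspan"
  using assms(1)
proof (induction f rule: expspan.induct)
  case (gen w)
  then show ?case using expspan_mult_gen[OF assms(2)] by simp
next
  case (add f h)
  then show ?case using expspan.add[OF add.IH] by (simp add: distrib_right)
next
  case (scale f c)
  then show ?case using expspan.scale[OF scale.IH, of c] by (simp add: algebra_simps)
qed

lemma expspan_const: "(\<lambda>z. c) \<in> expspan"
  using expspan.scale[OF expspan.gen[of 0], of c] by simp

lemma expspan_cont: "f \<in> expspan \<Longrightarrow> continuous_on S f"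
  by (induction f rule: expspan.induct) (auto intro!: continuous_intros)

lemma expspan_approx: "f \<in> expspan \<Longrightarrow> compact S \<Longrightarrow> approx S f"
proof (induction f rule: expspan.induct)
  case (gen w) then show ?case by (rule approx_exp)
next
  case (add f g) then show ?case by (intro approx_add)
next
  case (scale f c) then show ?case by (intro approx_scale)
qed

lemma expspan_sep:
  assumes "(x::'b::euclidean_space) \<noteq> y" shows "\<exists>f\<in>expspan. f x \<noteq> f y"
proof
  have "(x - y) \<bullet> x - (x - y) \<bullet> y = (x - y) \<bullet> (x - y)" by (simp add: inner_diff_right)
  also have "\<dots> > 0" using assms by simp
  finally have "(x - y) \<bullet> x \<noteq> (x - y) \<bullet> y" by simp
  then show "exp ((x - y) \<bullet> x) \<noteq> exp ((x - y) \<bullet> y)" by simp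
qed (rule expspan.gen)

lemma approx_real:
  fixes f :: "'b::euclidean_space \<Rightarrow> real"
  assumes S: "compact S" and f: "continuous_on S f"
  shows "approx S f"
proof -
  interpret function_ring_on "expspan :: ('b \<Rightarrow> real) set" S
  proof unfold_locales
    show "compact S" by (rule S)
  next
    fix f :: "'b \<Rightarrow> real" assume "f \<in> expspan" then show "continuous_on S f" by (rule expspan_cont)
  next
    fix f g :: "'b \<Rightarrow> real" assume "f \<in> expspan" "g \<in> expspan" then show "(\<lambda>x. f x + g x) \<in> expspan" by (rule expspan.add)
  next
    fix f g :: "'b \<Rightarrow> real" assume "f \<in> expspan" "g \<in> expspan" then show "(\<lambda>x. f x * g x) \<in> expspan" by (rule expspan_mult)
  next
    fix c show "(\<lambda>_. c) \<in> expspan" by (rule expspan_const)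
  next
    fix x y :: 'b assume "x \<in> S" "y \<in> S" "x \<noteq> y" then show "\<exists>f\<in>expspan. f x \<noteq> f y" by (intro expspan_sep)
  qed
  from Stone_Weierstrass[OF f] obtain F where F: "F \<in> UNIV \<rightarrow> expspan" and lim: "uniform_limit S F f sequentially"
    by (elim bexE)
  show ?thesis
  proof (rule approx_limit)
    fix d :: real assume d: "d > 0"
    have "\<forall>\<^sub>F n in sequentially. \<forall>x\<in>S. dist (F n x) (f x) < d"
      using uniform_limitD[OF lim d] .
    then obtain n where n: "\<forall>x\<in>S. dist (F n x) (f x) < d"
      by (metis (no_types, lifting) eventually_sequentially order_refl)
    show "\<exists>g. approx S g \<and> (\<forall>z\<in>S. norm (f z - g z) \<le> d)"
    proof (intro exI conjI ballI)
      show "approx S (F n)" using F S by (auto intro: expspan_approx)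
      fix z assume "z \<in> S" then show "norm (f z - F n z) \<le> d"
        using n by (auto simp: dist_norm norm_minus_commute less_imp_le)
    qed
  qed
qed

lemma approx_vector:
  fixes f :: "'b::euclidean_space \<Rightarrow> 'c::euclidean_space"
  assumes S: "compact S" and f: "continuous_on S f"
  shows "approx S f"
proof -
  have "approx S (\<lambda>z. \<Sum>e\<in>Basis. (f z \<bullet> e) *\<^sub>R e)"
  proof (rule approx_sum)
    fix e :: 'c assume "e \<in> Basis"
    have "continuous_on S (\<lambda>z. f z \<bullet> e)" using f by (intro continuous_on_inner continuous_on_const)
    then show "approx S (\<lambda>z. (f z \<bullet> e) *\<^sub>R e)" by (intro approx_vec approx_real S)
  qed auto
  then show ?thesis by (simp add: euclidean_representation)
qed



lemma gronwall:
  fixes u :: "real \<Rightarrow> real"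
  assumes T: "0 \<le> T" and cu: "continuous_on {0..T} u" and L: "L \<ge> 0"
    and le: "\<And>t. t \<in> {0..T} \<Longrightarrow> u t \<le> C + L * integral {0..t} u"
    and t: "t \<in> {0..T}"
  shows "u t \<le> C * exp (L * t)"
proof -
  define U where "U = (\<lambda>t. integral {0..t} u)"
  define W where "W = (\<lambda>t. exp (- L * t) * (C + L * U t))"
  have dU: "(U has_real_derivative u x) (at x within {0..T})" if "x \<in> {0..T}" for x
    unfolding U_def by (rule integral_has_real_derivative[OF cu that])
  have dW: "(W has_real_derivative (exp (- L * x) * (- L) * (C + L * U x) + exp (- L * x) * (L * u x))) (at x within {0..T})"
    if "x \<in> {0..T}" for x
    unfolding W_def
    by (rule derivative_eq_intros refl dU[OF that] | simp)+
  have cW: "continuous_on {0..T} W"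
    unfolding continuous_on_eq_continuous_within using dW
    by (meson DERIV_continuous)
  have "W t \<le> W 0"
  proof (rule DERIV_nonpos_imp_decreasing_open[of 0 t W])
    show "0 \<le> t" using t by simp
    show "continuous_on {0..t} W" using t by (intro continuous_on_subset[OF cW]) auto
    fix x assume x: "0 < x" "x < t"
    then have xi: "x \<in> interior {0..T}" using t by auto
    have xT: "x \<in> {0..T}" using x t by auto
    have "(W has_real_derivative (exp (- L * x) * (- L) * (C + L * U x) + exp (- L * x) * (L * u x))) (at x)"
      using dW[OF xT] by (simp add: at_within_interior[OF xi])
    moreover have "exp (- L * x) * (- L) * (C + L * U x) + exp (- L * x) * (L * u x) = (exp (- L * x) * L) * (u x - (C + L * U x))"
      by (simp add: algebra_simps)
    moreover have "(exp (- L * x) * L) * (u x - (C + L * U x)) \<le> 0"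
      using le[OF xT] L unfolding U_def by (intro mult_nonneg_nonpos) auto
    ultimately show "\<exists>y. (W has_real_derivative y) (at x) \<and> y \<le> 0" by auto
  qed
  then have "exp (- L * t) * (C + L * U t) \<le> C" unfolding W_def U_def by simp
  then have "C + L * U t \<le> C * exp (L * t)"
    by (simp add: exp_minus field_simps)
  then show ?thesis using le[OF t] unfolding U_def by simp
qed

lemma norm_integral_bound_finite:
  fixes f :: "real \<Rightarrow> 'a::euclidean_space"
  assumes f: "f integrable_on S" and g: "g integrable_on S" and F: "finite F"
    and le: "\<And>x. x \<in> S - F \<Longrightarrow> norm (f x) \<le> g x"
  shows "norm (integral S f) \<le> integral S g"
proof -
  define g' where "g' = (\<lambda>x. if x \<in> F then norm (f x) else g x)"
  have g': "g' integrable_on S" by (rule integrable_spike_finite[OF F _ g]) (auto simp: g'_def)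
  have "integral S g' = integral S g"
    using F by (intro integral_spike[where S=F]) (auto simp: g'_def negligible_finite)
  moreover have "norm (integral S f) \<le> integral S g'"
    using f g' by (rule integral_norm_bound_integral) (auto simp: g'_def le)
  ultimately show ?thesis by simp
qed



lemma integral_power_bound:
  fixes t c :: real and k :: nat
  assumes "0 \<le> t"
  shows "((\<lambda>r. c * r ^ k) has_integral (c * t ^ Suc k / Suc k)) {0..t}"
proof -
  have "((\<lambda>r. c * r ^ k) has_integral ((\<lambda>r. c * r ^ Suc k / Suc k) t - (\<lambda>r. c * r ^ Suc k / Suc k) 0)) {0..t}"
  proof (rule fundamental_theorem_of_calculus[OF assms])
    fix x assume "x \<in> {0..t}"
    have "((\<lambda>r. c * r ^ Suc k / Suc k) has_real_derivative (c * (Suc k * x ^ k) / Suc k)) (at x within {0..t})"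
      by (rule derivative_eq_intros refl | simp)+
    then show "((\<lambda>r. c * r ^ Suc k / Suc k) has_vector_derivative c * x ^ k) (at x within {0..t})"
      by (simp add: has_real_derivative_iff_has_vector_derivative[symmetric])
  qed
  then show ?thesis by simp
qed

lemma picard:
  fixes V :: "'a::euclidean_space \<Rightarrow> real \<Rightarrow> 'a" and x0 :: 'a
  assumes T: "0 \<le> T" and L: "0 \<le> L"
    and bnd: "\<And>x r. norm (V x r) \<le> M"
    and lip: "\<And>x y r. norm (V x r - V y r) \<le> L * norm (x - y)"
    and int: "\<And>y. continuous_on {0..T} y \<Longrightarrow> (\<lambda>r. V (y r) r) integrable_on {0..T}"
  shows "\<exists>y. continuous_on {0..T} y \<and> (\<forall>t\<in>{0..T}. ((\<lambda>s. V (y s) s) has_integral (y t - x0)) {0..t})"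
proof -
  define Pic where "Pic y t = x0 + integral {0..t} (\<lambda>r. V (y r) r)" for y :: "real \<Rightarrow> 'a" and t
  have intt: "(\<lambda>r. V (y r) r) integrable_on {0..t}" if "continuous_on {0..T} y" "t \<in> {0..T}" for y t
    using integrable_subinterval_real[OF int[OF that(1)]] that(2) by auto
  have cPic: "continuous_on {0..T} (Pic y)" if "continuous_on {0..T} y" for y
    unfolding Pic_def by (intro continuous_intros indefinite_integral_continuous_1 int that)
  have M0: "M \<ge> 0" using bnd[of 0 0] norm_ge_zero order_trans by blast
  have diffb: "norm (Pic y t - Pic z t) \<le> integral {0..t} g"
    if y: "continuous_on {0..T} y" and z: "continuous_on {0..T} z" and t: "t \<in> {0..T}"
      and g: "g integrable_on {0..t}" and gle: "\<And>r. r \<in> {0..t} \<Longrightarrow> L * norm (y r - z r) \<le> g r" for y z t g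
  proof -
    have "Pic y t - Pic z t = integral {0..t} (\<lambda>r. V (y r) r - V (z r) r)"
      unfolding Pic_def using intt[OF y t] intt[OF z t] by (simp add: integral_diff)
    also have "norm \<dots> \<le> integral {0..t} g"
      by (rule integral_norm_bound_integral[OF integrable_diff[OF intt[OF y t] intt[OF z t]] g])
         (meson lip gle order_trans)
    finally show ?thesis .
  qed
  define Y where "Y n = (Pic ^^ n) (\<lambda>t. x0)" for n
  have YS: "Y (Suc n) = Pic (Y n)" for n by (simp add: Y_def)
  have Y0: "Y 0 = (\<lambda>t. x0)" by (simp add: Y_def)
  have cY: "continuous_on {0..T} (Y n)" for n
    by (induction n) (auto simp: YS Y0 intro: cPic)
  have est: "\<forall>t\<in>{0..T}. norm (Y (Suc n) t - Y n t) \<le> M * L^n * t^(Suc n) / fact (Suc n)" for n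
  proof (induction n)
    case 0
    show ?case
    proof
      fix t assume t: "t \<in> {0..T}"
      have "Y (Suc 0) t - Y 0 t = integral {0..t} (\<lambda>r. V x0 r)" by (simp add: YS Y0 Pic_def)
      also have "norm \<dots> \<le> integral {0..t} (\<lambda>r. M)"
        using intt[OF cY[of 0] t] by (intro integral_norm_bound_integral) (auto simp: Y0 bnd)
      also have "\<dots> = M * t" using t by simp
      finally show "norm (Y (Suc 0) t - Y 0 t) \<le> M * L^0 * t^(Suc 0) / fact (Suc 0)" by simp
    qed
  next
    case (Suc n)
    show ?case
    proof
      fix t assume t: "t \<in> {0..T}"
      define c where "c = L * (M * L^n / fact (Suc n))"
      have gi: "((\<lambda>r. c * r ^ Suc n) has_integral (c * t ^ Suc (Suc n) / Suc (Suc n))) {0..t}"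
        using t by (intro integral_power_bound) auto
      have "norm (Y (Suc (Suc n)) t - Y (Suc n) t) = norm (Pic (Y (Suc n)) t - Pic (Y n) t)" by (simp add: YS)
      also have "\<dots> \<le> integral {0..t} (\<lambda>r. c * r ^ Suc n)"
      proof (rule diffb[OF cY cY t])
        show "(\<lambda>r. c * r ^ Suc n) integrable_on {0..t}" using gi by blast
        fix r assume r: "r \<in> {0..t}"
        then have "r \<in> {0..T}" using t by auto
        then have "norm (Y (Suc n) r - Y n r) \<le> M * L^n * r^(Suc n) / fact (Suc n)" using Suc.IH by blast
        then have "L * norm (Y (Suc n) r - Y n r) \<le> L * (M * L^n * r^(Suc n) / fact (Suc n))"
          using L by (rule mult_left_mono)
        then show "L * norm (Y (Suc n) r - Y n r) \<le> c * r ^ Suc n" by (simp add: c_def)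
      qed
      also have "\<dots> = c * t ^ Suc (Suc n) / Suc (Suc n)" using gi by (rule integral_unique)
      also have "\<dots> = M * L ^ Suc n * t ^ Suc (Suc n) / fact (Suc (Suc n))"
        unfolding c_def by (simp add: field_simps)
      finally show "norm (Y (Suc (Suc n)) t - Y (Suc n) t) \<le> M * L ^ Suc n * t ^ Suc (Suc n) / fact (Suc (Suc n))" .
    qed
  qed
  define D where "D i t = Y (Suc i) t - Y i t" for i t
  define Mi where "Mi i = M * T * (inverse (fact i) * (L*T)^i)" for i
  have DM: "norm (D i t) \<le> Mi i" if t: "t \<in> {0..T}" for i t
  proof -
    have t0: "0 \<le> t" "t \<le> T" using t by auto
    have "norm (D i t) \<le> M * L^i * t^(Suc i) / fact (Suc i)" using est[of i] t unfolding D_def by blast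
    also have "\<dots> \<le> M * L^i * T^(Suc i) / fact (Suc i)"
      using t0 M0 L by (intro divide_right_mono mult_left_mono power_mono) auto
    also have "\<dots> \<le> M * L^i * T^(Suc i) / fact i"
      using T M0 L by (intro divide_left_mono) (auto simp: fact_mono)
    also have "\<dots> = Mi i" unfolding Mi_def by (simp add: field_simps power_mult_distrib)
    finally show ?thesis .
  qed
  have sm: "summable Mi" unfolding Mi_def by (intro summable_mult summable_exp)
  have ul: "uniform_limit {0..T} (\<lambda>n t. \<Sum>i<n. D i t) (\<lambda>t. \<Sum>i. D i t) sequentially"
    by (rule Weierstrass_m_test[OF DM sm])
  define y where "y t = x0 + (\<Sum>i. D i t)" for t
  have sumD: "(\<Sum>i<n. D i t) = Y n t - x0" for n t
    using sum_lessThan_telescope[of "\<lambda>i. Y i t" n] Y0 unfolding D_def by simp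
  have ulY: "uniform_limit {0..T} Y y sequentially"
    using ul unfolding uniform_limit_iff sumD y_def
    by (simp add: dist_norm algebra_simps)
  have cy: "continuous_on {0..T} y"
    by (rule uniform_limit_theorem[OF _ ulY]) (auto simp: cY)
  show ?thesis
  proof (intro exI conjI ballI)
    show "continuous_on {0..T} y" by (rule cy)
    fix t assume t: "t \<in> {0..T}"
    have lim1: "(\<lambda>n. Y (Suc n) t) \<longlonglongrightarrow> y t"
      using LIMSEQ_Suc[OF tendsto_uniform_limitI[OF ulY t]] .
    have lim2: "(\<lambda>n. Pic (Y n) t) \<longlonglongrightarrow> Pic y t"
    proof (rule tendstoI)
      fix e :: real assume e: "e > 0"
      define e' where "e' = e / (L*T+1)"
      have LT: "L*T+1 > 0" using L T by (simp add: add_nonneg_pos)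
      have e': "e' > 0" using e LT by (simp add: e'_def)
      have "\<forall>\<^sub>F n in sequentially. \<forall>r\<in>{0..T}. dist (Y n r) (y r) < e'"
        using ulY e' unfolding uniform_limit_iff by blast
      then show "\<forall>\<^sub>F n in sequentially. dist (Pic (Y n) t) (Pic y t) < e"
      proof (rule eventually_mono)
        fix n assume n: "\<forall>r\<in>{0..T}. dist (Y n r) (y r) < e'"
        have "norm (Pic (Y n) t - Pic y t) \<le> integral {0..t} (\<lambda>r. L * e')"
        proof (rule diffb[OF cY cy t])
          show "(\<lambda>r. L * e') integrable_on {0..t}" by (rule integrable_const_ivl)
          fix r assume "r \<in> {0..t}"
          then have "r \<in> {0..T}" using t by auto
          then have "norm (Y n r - y r) \<le> e'" using n by (auto simp: dist_norm less_imp_le)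
          then show "L * norm (Y n r - y r) \<le> L * e'" using L by (rule mult_left_mono)
        qed
        also have "\<dots> = t * (L * e')" using t by simp
        also have "\<dots> \<le> T * (L * e')" using t L e' by (intro mult_right_mono) auto
        also have "\<dots> < e"
        proof -
          have "T * (L * e') = e * (L*T) / (L*T+1)" unfolding e'_def by (simp add: field_simps)
          also have "\<dots> < e" using e LT by (simp add: divide_less_eq algebra_simps)
          finally show ?thesis .
        qed
        finally show "dist (Pic (Y n) t) (Pic y t) < e" by (simp add: dist_norm)
      qed
    qed
    have "y t = Pic y t" using LIMSEQ_unique[OF lim1] lim2 unfolding YS by blast
    then have "integral {0..t} (\<lambda>r. V (y r) r) = y t - x0" unfolding Pic_def by simp
    then show "((\<lambda>s. V (y s) s) has_integral (y t - x0)) {0..t}"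
      using intt[OF cy t] by (metis has_integral_integral)
  qed
qed



lemma tanh_lip_lt:
  fixes a b :: real assumes "a < b"
  shows "\<bar>tanh b - tanh a\<bar> \<le> \<bar>b - a\<bar>"
proof -
  have d: "DERIV tanh x :> 1 - tanh x ^ 2" for x :: real
    by (rule derivative_eq_intros refl | simp add: cosh_real_pos[THEN less_imp_neq, symmetric])+
  obtain z where z: "tanh b - tanh a = (b - a) * (1 - tanh z ^ 2)"
    using MVT2[OF assms, of tanh "\<lambda>x. 1 - tanh x ^ 2"] d by blast
  have t: "\<bar>tanh z\<bar> < 1" using tanh_real_bounds[of z] by auto
  then have "tanh z ^ 2 < 1" by (simp add: abs_square_less_1)
  then have "0 \<le> 1 - tanh z ^ 2" "1 - tanh z ^ 2 \<le> 1" by auto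
  then show ?thesis unfolding z using assms by (simp add: abs_mult mult_left_le)
qed

lemma tanh_lip:
  fixes a b :: real
  shows "\<bar>tanh a - tanh b\<bar> \<le> \<bar>a - b\<bar>"
proof (cases a b rule: linorder_cases)
  case less then show ?thesis using tanh_lip_lt[OF less] by (simp add: abs_minus_commute)
next
  case greater then show ?thesis using tanh_lip_lt[OF greater] by simp
qed simp

lemma abs_tanh_le_1: "\<bar>tanh (x::real)\<bar> \<le> 1"
  using tanh_real_bounds[of x] by auto

lemma smooth_on_affine:
  fixes u z :: "'b::real_normed_vector"
  assumes "\<And>r. r \<in> S \<Longrightarrow> f r = r *\<^sub>R u + z"
  shows "smooth_on S f"
proof -
  define D where "D = (\<lambda>n::nat. if n = 0 then (\<lambda>r::real. r *\<^sub>R u + z) else if n = 1 then (\<lambda>_. u) else (\<lambda>_. 0))"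
  show ?thesis unfolding smooth_on_def
  proof (rule exI[of _ D], intro conjI ballI allI)
  show "D 0 t = f t" if "t \<in> S" for t using assms[OF that] by (simp add: D_def)
  fix n t assume "t \<in> S"
  show "(D n has_vector_derivative D (Suc n) t) (at t)"
  proof (cases "n = 0")
    case True then show ?thesis
      by (simp add: D_def) (rule derivative_eq_intros refl | simp)+
  next
    case False then show ?thesis
      by (cases "n = 1") (auto simp: D_def intro: has_vector_derivative_const)
  qed
  qed
qed

lemma piecewise_affine:
  fixes f :: "real \<Rightarrow> 'b::real_normed_vector"
  assumes K: "finite K" "K \<subseteq> {0<..<\<tau>}"
    and aff: "\<And>s t. consecutive \<tau> K s t \<Longrightarrow> \<exists>u z. \<forall>r\<in>{s<..<t}. f r = r *\<^sub>R u + z"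
  shows "piecewise_smooth_fun \<tau> f"
  unfolding piecewise_smooth_fun_def
proof (rule exI[of _ K], intro conjI allI impI)
  show "finite K" using K by auto
  show "K \<subseteq> {0<..<\<tau>}" using K by auto
  fix s t assume c: "consecutive \<tau> K s t"
  obtain u z where uz: "\<forall>r\<in>{s<..<t}. f r = r *\<^sub>R u + z" using aff[OF c] by blast
  show "smooth_on {s<..<t} f" using uz by (intro smooth_on_affine) auto
  show "\<exists>g. continuous_on {s..t} g \<and> (\<forall>r\<in>{s<..<t}. g r = f r)"
    using uz by (intro exI[of _ "\<lambda>r. r *\<^sub>R u + z"]) (auto intro!: continuous_intros)
qed

lemma finite_common_bound:
  fixes Q :: "'a \<Rightarrow> 'b::linorder \<Rightarrow> bool"
  assumes "finite P" "\<And>s. s \<in> P \<Longrightarrow> \<exists>b. \<forall>b'\<ge>b. Q s b'"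
  shows "\<exists>b. \<forall>b'\<ge>b. \<forall>s\<in>P. Q s b'"
  using assms
proof (induction P rule: finite_induct)
  case empty then show ?case by auto
next
  case (insert x F)
  obtain b1 where b1: "\<forall>b'\<ge>b1. \<forall>s\<in>F. Q s b'" using insert.IH insert.prems by auto
  obtain b2 where b2: "\<forall>b'\<ge>b2. Q x b'" using insert.prems[of x] by auto
  show ?case by (rule exI[of _ "max b1 b2"]) (use b1 b2 in auto)
qed

definition lp :: "real set \<Rightarrow> real \<Rightarrow> real" where
  "lp K r = Max (insert 0 {k\<in>K. k < r})"
definition rp :: "real \<Rightarrow> real set \<Rightarrow> real \<Rightarrow> real" where
  "rp \<tau> K s = Min (insert \<tau> {k\<in>K. s < k})"

lemma lp_mem: "finite K \<Longrightarrow> lp K r \<in> insert 0 K"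
  unfolding lp_def using Max_in[of "insert 0 {k\<in>K. k < r}"] by auto

lemma rp_props:
  assumes K: "finite K" "K \<subseteq> {0<..<\<tau>}" and s: "s \<in> insert 0 K" and tau: "0 < \<tau>"
  shows "consecutive \<tau> K s (rp \<tau> K s)"
proof -
  have fin: "finite (insert \<tau> {k\<in>K. s < k})" using K by auto
  have sl: "s < \<tau>" using s K tau by auto
  have mem: "rp \<tau> K s \<in> insert \<tau> {k\<in>K. s < k}" unfolding rp_def using Min_in[OF fin] by auto
  have "s < rp \<tau> K s" using mem sl by auto
  moreover have "{s<..<rp \<tau> K s} \<inter> K = {}"
  proof (rule ccontr)
    assume "{s<..<rp \<tau> K s} \<inter> K \<noteq> {}"
    then obtain k where k: "k \<in> K" "s < k" "k < rp \<tau> K s" by auto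
    have "rp \<tau> K s \<le> k" unfolding rp_def using fin k by (intro Min_le) auto
    then show False using k by simp
  qed
  ultimately show ?thesis using s mem unfolding consecutive_def by auto
qed

lemma lp_const:
  assumes K: "finite K" "K \<subseteq> {0<..<\<tau>}" and c: "consecutive \<tau> K s t" and r: "r \<in> {s<..<t}"
    and tau: "0 < \<tau>"
  shows "lp K r = s"
proof -
  have s: "s \<in> insert 0 (insert \<tau> K)" "t \<in> insert 0 (insert \<tau> K)" "s < t" "{s<..<t} \<inter> K = {}"
    using c unfolding consecutive_def by auto
  have "t \<le> \<tau>" using s(2) K tau by auto
  then have s0: "s \<in> insert 0 K" using s by auto
  have fin: "finite (insert 0 {k\<in>K. k < r})" using K by auto
  have sin: "s \<in> insert 0 {k\<in>K. k < r}" using s0 r by auto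
  have ub: "k \<le> s" if "k \<in> insert 0 {k\<in>K. k < r}" for k
  proof -
    have "k = 0 \<or> (k \<in> K \<and> k < r)" using that by auto
    moreover have "0 \<le> s" using s0 K by auto
    moreover { assume "k \<in> K" "k < r" "s < k"
      then have "k \<in> {s<..<t} \<inter> K" using r by auto
      then have False using s(4) by auto }
    ultimately show ?thesis by force
  qed
  show ?thesis unfolding lp_def using fin sin ub by (intro Max_eqI) auto
qed

lemma piece_of:
  assumes K: "finite K" "K \<subseteq> {0<..<\<tau>}" and r: "r \<in> {0<..<\<tau>}" "r \<notin> K"
  shows "consecutive \<tau> K (lp K r) (rp \<tau> K (lp K r)) \<and> r \<in> {lp K r<..<rp \<tau> K (lp K r)}"
proof -
  have tau: "0 < \<tau>" using r by auto
  have lm: "lp K r \<in> insert 0 K" using lp_mem[OF K(1)] .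
  have c: "consecutive \<tau> K (lp K r) (rp \<tau> K (lp K r))" by (rule rp_props[OF K lm tau])
  have fin: "finite (insert 0 {k\<in>K. k < r})" using K by auto
  have "lp K r \<in> insert 0 {k\<in>K. k < r}" unfolding lp_def using Max_in[OF fin] by auto
  then have l: "lp K r < r" using r by auto
  have fin2: "finite (insert \<tau> {k\<in>K. lp K r < k})" using K by auto
  have "rp \<tau> K (lp K r) \<in> insert \<tau> {k\<in>K. lp K r < k}" unfolding rp_def using Min_in[OF fin2] by auto
  then consider "rp \<tau> K (lp K r) = \<tau>" | "rp \<tau> K (lp K r) \<in> K" "lp K r < rp \<tau> K (lp K r)" by auto
  then have "r < rp \<tau> K (lp K r)"
  proof cases
    case 1 then show ?thesis using r by auto
  next
    case 2
    show ?thesis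
    proof (rule ccontr)
      assume "\<not> r < rp \<tau> K (lp K r)"
      then have "rp \<tau> K (lp K r) < r" using 2 r by (cases "rp \<tau> K (lp K r) = r") auto
      then have "rp \<tau> K (lp K r) \<in> insert 0 {k\<in>K. k < r}" using 2 by auto
      then have "rp \<tau> K (lp K r) \<le> lp K r" unfolding lp_def using fin by (intro Max_ge)
      then show False using 2 by simp
    qed
  qed
  then show ?thesis using c l by auto
qed



lemma cosh_ne0 [simp]: "cosh (x::real) \<noteq> 0"
  using cosh_real_pos[of x] by simp

definition ent :: "('a::real_vector \<times> ('a \<times> real) \<times> real) list \<Rightarrow> nat \<Rightarrow> ('a \<times> ('a \<times> real) \<times> real)" where
  "ent l i = (if 1 \<le> i \<and> i \<le> length l then l ! (i - 1) else (0, (0, 0), 0))"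

definition term3 :: "'a::real_inner \<times> real \<Rightarrow> ('a \<times> ('a \<times> real) \<times> real) \<Rightarrow> 'a" where
  "term3 z e = tanh (fst (snd e) \<bullet> z + snd (snd e)) *\<^sub>R fst e"

lemma netL_term3: "netL l z = (\<Sum>k<length l. term3 z (l ! k))"
proof -
  have "netL l z = sum_list (map (term3 z) l)"
    unfolding netL_def term3_def by (induction l) auto
  also have "\<dots> = (\<Sum>k=0..<length l. term3 z (l ! k))"
    by (simp add: sum_list_sum_nth)
  finally show ?thesis by (simp add: atLeast0LessThan)
qed

lemma sum_ent:
  assumes "length l \<le> N"
  shows "(\<Sum>i=1..N. term3 z (ent l i)) = netL l z"
proof -
  have "(\<Sum>i=1..N. term3 z (ent l i)) = (\<Sum>i\<in>Suc ` {0..<N}. term3 z (ent l i))"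
    by (simp add: atLeastLessThanSuc_atLeastAtMost)
  also have "\<dots> = (\<Sum>k\<in>{0..<N}. term3 z (ent l (Suc k)))"
    by (subst sum.reindex) auto
  also have "\<dots> = (\<Sum>k\<in>{0..<length l}. term3 z (ent l (Suc k)))"
    using assms by (intro sum.mono_neutral_right) (auto simp: ent_def term3_def)
  also have "\<dots> = (\<Sum>k<length l. term3 z (l ! k))"
    by (intro sum.cong) (auto simp: ent_def)
  finally show ?thesis by (simp add: netL_term3)
qed

lemma netL_cont: "continuous_on UNIV (netL (l :: ('c::real_normed_vector \<times> 'b::real_inner \<times> real) list))"
proof (induction l)
  case Nil then show ?case by (simp add: netL_def[abs_def])
next
  case (Cons e l)
  obtain a w b where e: "e = (a, w, b)" by (cases e) auto
  have "netL (e # l) = (\<lambda>z. tanh (w \<bullet> z + b) *\<^sub>R a + netL l z)" by (simp add: e fun_eq_iff)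
  moreover have "continuous_on UNIV (\<lambda>z. tanh (w \<bullet> z + b) *\<^sub>R a)" by (auto intro!: continuous_intros)
  ultimately show ?case using continuous_on_add[OF _ Cons.IH] by metis
qed

lemma term3_alt:
  "term3 (x, r) e = tanh (fst (fst (snd e)) \<bullet> x + (snd (fst (snd e)) * r + snd (snd e))) *\<^sub>R fst e"
  by (cases e) (auto simp: term3_def algebra_simps)

definition nA :: "('c::real_normed_vector \<times> 'b \<times> real) list \<Rightarrow> real" where
  "nA l = (\<Sum>(a,w,b)\<leftarrow>l. norm a)"
definition nW :: "('c::real_normed_vector \<times> 'b::real_normed_vector \<times> real) list \<Rightarrow> real" where
  "nW l = (\<Sum>(a,w,b)\<leftarrow>l. norm a * norm w)"

lemma nA_nonneg: "nA l \<ge> 0"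
  unfolding nA_def by (induction l) auto
lemma nW_nonneg: "nW l \<ge> 0"
  unfolding nW_def by (induction l) auto

lemma netL_bound:
  fixes l :: "('c::real_normed_vector \<times> 'b::real_inner \<times> real) list"
  shows "norm (netL l z) \<le> nA l"
proof (induction l)
  case Nil then show ?case by (simp add: nA_def)
next
  case (Cons e l)
  obtain a w b where e: "e = (a, w, b)" by (cases e) auto
  have "netL (e # l) z = tanh (w \<bullet> z + b) *\<^sub>R a + netL l z" by (simp add: e)
  then have "norm (netL (e # l) z) \<le> norm (tanh (w \<bullet> z + b) *\<^sub>R a) + norm (netL l z)"
    by (metis norm_triangle_ineq)
  also have "\<dots> \<le> norm a + nA l"
    using Cons abs_tanh_le_1[of "w \<bullet> z + b"] by (intro add_mono) (auto simp: mult_left_le_one_le)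
  finally show ?case by (simp add: e nA_def)
qed

lemma netL_lip:
  fixes l :: "('c::real_normed_vector \<times> 'b::real_inner \<times> real) list"
  shows "norm (netL l z - netL l z') \<le> nW l * norm (z - z')"
proof (induction l)
  case Nil then show ?case by (simp add: nW_def)
next
  case (Cons e l)
  obtain a w b where e: "e = (a, w, b)" by (cases e) auto
  have "netL (e # l) z - netL (e # l) z' = (tanh (w \<bullet> z + b) - tanh (w \<bullet> z' + b)) *\<^sub>R a + (netL l z - netL l z')"
    by (simp add: e algebra_simps)
  then have "norm (netL (e # l) z - netL (e # l) z') \<le> norm ((tanh (w \<bullet> z + b) - tanh (w \<bullet> z' + b)) *\<^sub>R a) + norm (netL l z - netL l z')"
    by (metis norm_triangle_ineq)
  also have "\<dots> \<le> norm a * norm w * norm (z - z') + nW l * norm (z - z')"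
  proof (rule add_mono[OF _ Cons])
    have "\<bar>tanh (w \<bullet> z + b) - tanh (w \<bullet> z' + b)\<bar> \<le> \<bar>w \<bullet> (z - z')\<bar>"
      using tanh_lip[of "w \<bullet> z + b" "w \<bullet> z' + b"] by (simp add: inner_diff_right)
    also have "\<dots> \<le> norm w * norm (z - z')" by (rule Cauchy_Schwarz_ineq2)
    finally have "\<bar>tanh (w \<bullet> z + b) - tanh (w \<bullet> z' + b)\<bar> * norm a \<le> norm w * norm (z - z') * norm a"
      by (rule mult_right_mono) simp
    moreover have "norm ((tanh (w \<bullet> z + b) - tanh (w \<bullet> z' + b)) *\<^sub>R a) = \<bar>tanh (w \<bullet> z + b) - tanh (w \<bullet> z' + b)\<bar> * norm a"
      by (rule norm_scaleR)
    ultimately show "norm ((tanh (w \<bullet> z + b) - tanh (w \<bullet> z' + b)) *\<^sub>R a) \<le> norm a * norm w * norm (z - z')"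
      by (simp only: mult_ac)
  qed
  finally show ?case by (simp add: e nW_def algebra_simps)
qed



theorem mainTheorem7:
  fixes v :: "'a::euclidean_space \<Rightarrow> real \<Rightarrow> 'a"
    and \<phi> :: "real \<Rightarrow> 'a \<Rightarrow> 'a"
    and \<Omega> :: "'a set" and \<tau> \<epsilon> :: real
  assumes "0 < \<tau>" and "standing_assumption \<tau> v" and "is_flow \<tau> v \<phi>"
    and "compact \<Omega>" and "\<epsilon> > 0"
  shows "\<exists>N::nat. N > 0 \<and>
    (\<exists>(a :: nat \<Rightarrow> real \<Rightarrow> 'a) (w :: nat \<Rightarrow> real \<Rightarrow> 'a) (b :: nat \<Rightarrow> real \<Rightarrow> real).
      (\<forall>i\<in>{1..N}. piecewise_smooth_fun \<tau> (a i) \<and> piecewise_smooth_fun \<tau> (w i)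
                    \<and> piecewise_smooth_fun \<tau> (b i)) \<and>
      (let vt = (\<lambda>x t. \<Sum>i=1..N. tanh (w i t \<bullet> x + b i t) *\<^sub>R a i t) in
        (\<exists>\<psi>. is_flow \<tau> vt \<psi>) \<and>
        (\<forall>\<psi>. is_flow \<tau> vt \<psi> \<longrightarrow>
           (\<forall>x\<in>\<Omega>. \<forall>t\<in>{0..\<tau>}. norm (\<phi> t x - \<psi> t x) \<le> \<epsilon>))))"
proof -
  note tau = assms(1)
  note eps = assms(5)
  from assms(2) obtain L0 K where
    lipv0: "\<forall>t\<in>{0<..<\<tau>}. \<forall>x y. norm (v x t - v y t) \<le> L0 * norm (x - y)"
    and K: "finite K" "K \<subseteq> {0<..<\<tau>}"
    and pc: "\<And>s t. consecutive \<tau> K s t \<Longrightarrow> (\<exists>g. continuous_on (UNIV \<times> {s..t}) (\<lambda>(x, r). g x r) \<and>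
                (\<forall>x. \<forall>r\<in>{s<..<t}. g x r = v x r))"
    unfolding standing_assumption_def by metis
  define L where "L = max L0 0"
  have L: "L \<ge> 0" unfolding L_def by simp
  have lipv: "norm (v x t - v y t) \<le> L * norm (x - y)" if "t \<in> {0<..<\<tau>}" for x y t
  proof -
    have "norm (v x t - v y t) \<le> L0 * norm (x - y)" using lipv0 that by blast
    also have "\<dots> \<le> L * norm (x - y)" unfolding L_def by (intro mult_right_mono) auto
    finally show ?thesis .
  qed
  define P where "P = insert 0 K"
  define E where "E = insert 0 (insert \<tau> K)"
  have finP: "finite P" and finE: "finite E" using K by (auto simp: P_def E_def)
  have cons: "consecutive \<tau> K s (rp \<tau> K s)" if "s \<in> P" for s
    using rp_props[OF K _ tau] that by (simp add: P_def)
  have "\<forall>s\<in>P. \<exists>g. continuous_on (UNIV \<times> {s..rp \<tau> K s}) (\<lambda>(x, r). g x r) \<and>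
                (\<forall>x. \<forall>r\<in>{s<..<rp \<tau> K s}. g x r = v x r)"
    using pc cons by blast
  then obtain G where G: "\<And>s. s \<in> P \<Longrightarrow> continuous_on (UNIV \<times> {s..rp \<tau> K s}) (\<lambda>(x, r). G s x r)"
    "\<And>s x r. s \<in> P \<Longrightarrow> r \<in> {s<..<rp \<tau> K s} \<Longrightarrow> G s x r = v x r"
    by metis
  have piece: "lp K r \<in> P \<and> r \<in> {lp K r<..<rp \<tau> K (lp K r)}" if "r \<in> {0<..<\<tau>}" "r \<notin> K" for r
    using piece_of[OF K that] lp_mem[OF K(1)] by (auto simp: P_def)
  have lpc: "lp K r = s" if "s \<in> P" "r \<in> {s<..<rp \<tau> K s}" for s r
    using lp_const[OF K cons[OF that(1)] that(2) tau] .
  have Gcont: "continuous_on S (\<lambda>z. G s (fst z) (snd z))" if "s \<in> P" "S \<subseteq> UNIV \<times> {s..rp \<tau> K s}" for s S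
    using continuous_on_subset[OF G(1)[OF that(1)] that(2)] by (simp add: case_prod_beta)
  have "\<exists>b. \<forall>b'\<ge>b. \<forall>s\<in>P. \<forall>r\<in>{s..rp \<tau> K s}. norm (G s 0 r) \<le> b'"
  proof (rule finite_common_bound[OF finP])
    fix s assume s: "s \<in> P"
    have "continuous_on {s..rp \<tau> K s} (\<lambda>r. G s (fst (0::'a, r)) (snd (0::'a, r)))"
      by (rule continuous_on_compose2[OF Gcont[OF s order_refl]]) (auto intro!: continuous_intros)
    then have "compact ((\<lambda>r. G s 0 r) ` {s..rp \<tau> K s})" by (intro compact_continuous_image) auto
    then obtain b where b: "\<forall>y\<in>(\<lambda>r. G s 0 r) ` {s..rp \<tau> K s}. norm y \<le> b"
      using compact_imp_bounded bounded_iff by metis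
    show "\<exists>b. \<forall>b'\<ge>b. \<forall>r\<in>{s..rp \<tau> K s}. norm (G s 0 r) \<le> b'"
    proof (intro exI[of _ b] allI impI ballI)
      fix b' r assume "b \<le> b'" "r \<in> {s..rp \<tau> K s}"
      then show "norm (G s 0 r) \<le> b'" using b by force
    qed
  qed
  then obtain B0 where B0': "\<forall>b'\<ge>B0. \<forall>s\<in>P. \<forall>r\<in>{s..rp \<tau> K s}. norm (G s 0 r) \<le> b'" by blast
  have B0: "\<And>s r. s \<in> P \<Longrightarrow> r \<in> {s..rp \<tau> K s} \<Longrightarrow> norm (G s 0 r) \<le> max B0 0"
    using B0'[rule_format, of "max B0 0"] by auto
  define B1 where "B1 = max B0 0"
  have B1: "B1 \<ge> 0" by (simp add: B1_def)
  have v0: "norm (v 0 r) \<le> B1" if "r \<in> {0<..<\<tau>}" "r \<notin> K" for r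
    using piece[OF that] G(2)[of "lp K r" r 0] B0[of "lp K r" r] unfolding B1_def by auto
  obtain RO0 where RO0: "\<And>x. x \<in> \<Omega> \<Longrightarrow> norm x \<le> RO0"
    using compact_imp_bounded[OF assms(4)] bounded_iff by metis
  define RO where "RO = max RO0 0"
  have RO: "\<And>x. x \<in> \<Omega> \<Longrightarrow> norm x \<le> RO" "RO \<ge> 0" using RO0 by (force simp: RO_def)+
  have phi_c: "continuous_on {0..\<tau>} (\<lambda>t. \<phi> t x0)" for x0
    using assms(3) unfolding is_flow_def by blast
  have phi_i: "((\<lambda>s. v (\<phi> s x0) s) has_integral (\<phi> t x0 - x0)) {0..t}" if "t \<in> {0..\<tau>}" for x0 t
    using assms(3) that unfolding is_flow_def by blast
  have Eout: "r \<in> {0<..<\<tau>} \<and> r \<notin> K" if "r \<in> {0..t} - E" "t \<le> \<tau>" for r t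
    using that by (auto simp: E_def)
  define R where "R = (RO + B1*\<tau>) * exp (L*\<tau>)"
  have trajR: "norm (\<phi> t x0) \<le> R" if x0: "x0 \<in> \<Omega>" and t: "t \<in> {0..\<tau>}" for t x0
  proof -
    define u where "u t = norm (\<phi> t x0)" for t
    have cu: "continuous_on {0..\<tau>} u" unfolding u_def by (intro continuous_intros phi_c)
    have ui: "u integrable_on {0..t}" if "t \<in> {0..\<tau>}" for t
      using that by (intro integrable_continuous_interval continuous_on_subset[OF cu]) auto
    have ineq: "u t \<le> (RO + B1*\<tau>) + L * integral {0..t} u" if t: "t \<in> {0..\<tau>}" for t
    proof -
      have eq: "\<phi> t x0 = x0 + integral {0..t} (\<lambda>s. v (\<phi> s x0) s)"
        using integral_unique[OF phi_i[OF t]] by simp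
      have Lui: "(\<lambda>r. L * u r) integrable_on {0..t}" using integrable_on_cmult_left[OF ui[OF t], of L] by simp
      then have gi: "(\<lambda>r. B1 + L * u r) integrable_on {0..t}"
        by (intro integrable_add integrable_const_ivl)
      have "norm (integral {0..t} (\<lambda>s. v (\<phi> s x0) s)) \<le> integral {0..t} (\<lambda>r. B1 + L * u r)"
      proof (rule norm_integral_bound_finite[OF _ gi finE])
        show "(\<lambda>s. v (\<phi> s x0) s) integrable_on {0..t}" using phi_i[OF t] by blast
        fix r assume r: "r \<in> {0..t} - E"
        then have r': "r \<in> {0<..<\<tau>}" "r \<notin> K" using Eout[OF r] t by auto
        have "norm (v (\<phi> r x0) r) \<le> norm (v 0 r) + norm (v (\<phi> r x0) r - v 0 r)"
          by (metis add.commute diff_add_cancel norm_triangle_ineq)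
        also have "\<dots> \<le> B1 + L * norm (\<phi> r x0 - 0)"
          using v0[OF r'] lipv[OF r'(1), of "\<phi> r x0" 0] by (intro add_mono) auto
        finally show "norm (v (\<phi> r x0) r) \<le> B1 + L * u r" by (simp add: u_def)
      qed
      also have "\<dots> = B1 * t + L * integral {0..t} u"
        using t by (simp add: integral_add[OF integrable_const_ivl Lui] integral_mult_right)
      also have "\<dots> \<le> B1 * \<tau> + L * integral {0..t} u"
        using t B1 L by (intro add_mono mult_left_mono) auto
      finally have "norm (integral {0..t} (\<lambda>s. v (\<phi> s x0) s)) \<le> B1 * \<tau> + L * integral {0..t} u" .
      moreover have "u t \<le> norm x0 + norm (integral {0..t} (\<lambda>s. v (\<phi> s x0) s))"
        unfolding u_def eq by (rule norm_triangle_ineq)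
      ultimately show ?thesis using RO(1)[OF x0] by simp
    qed
    have "u t \<le> (RO + B1*\<tau>) * exp (L * t)"
      by (rule gronwall[OF _ cu L ineq t]) (use tau in auto)
    also have "\<dots> \<le> R" unfolding R_def
      using t L RO(2) B1 tau by (intro mult_left_mono) (auto intro!: mult_left_mono)
    finally show ?thesis by (simp add: u_def)
  qed
  define R' where "R' = R + \<epsilon>"
  define \<delta> where "\<delta> = \<epsilon> / (2 * (\<tau> + 1)) / exp (L*\<tau>)"
  have \<delta>: "\<delta> > 0" using eps tau by (simp add: \<delta>_def)
  have \<delta>b: "\<delta> * \<tau> * exp (L*\<tau>) < \<epsilon>"
  proof -
    have "\<delta> * exp (L*\<tau>) = \<epsilon> / (2 * (\<tau> + 1))" unfolding \<delta>_def by simp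
    then have "\<delta> * \<tau> * exp (L*\<tau>) = \<tau> * (\<epsilon> / (2 * (\<tau> + 1)))" by (metis mult.commute mult.left_commute)
    also have "\<dots> < \<epsilon>" using eps tau by (simp add: field_simps add_pos_pos)
    finally show ?thesis .
  qed
  have "\<forall>s\<in>P. \<exists>l. \<forall>z\<in>cball 0 R' \<times> {s..rp \<tau> K s}. norm (G s (fst z) (snd z) - netL l z) \<le> \<delta>"
  proof
    fix s assume s: "s \<in> P"
    have "approx (cball 0 R' \<times> {s..rp \<tau> K s}) (\<lambda>z. G s (fst z) (snd z))"
      by (rule approx_vector[OF compact_Times[OF compact_cball compact_Icc] Gcont[OF s]]) auto
    then show "\<exists>l. \<forall>z\<in>cball 0 R' \<times> {s..rp \<tau> K s}. norm (G s (fst z) (snd z) - netL l z) \<le> \<delta>"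
      unfolding approx_def using \<delta> by blast
  qed
  then obtain Ls where Ls: "\<And>s z. s \<in> P \<Longrightarrow> z \<in> cball 0 R' \<times> {s..rp \<tau> K s} \<Longrightarrow>
      norm (G s (fst z) (snd z) - netL (Ls s) z) \<le> \<delta>"
    by metis
  define N where "N = Suc (\<Sum>s\<in>P. length (Ls s))"
  have lenN: "length (Ls s) \<le> N" if "s \<in> P" for s
    using member_le_sum[of s P "\<lambda>s. length (Ls s)"] finP that unfolding N_def by auto
  define a where "a i r = fst (ent (Ls (lp K r)) i)" for i r
  define w where "w i r = fst (fst (snd (ent (Ls (lp K r)) i)))" for i r
  define b where "b i r = snd (fst (snd (ent (Ls (lp K r)) i))) * r + snd (snd (ent (Ls (lp K r)) i))" for i r
  define vt where "vt = (\<lambda>x t. \<Sum>i=1..N. tanh (w i t \<bullet> x + b i t) *\<^sub>R a i t)"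
  have lpP: "lp K r \<in> P" for r using lp_mem[OF K(1)] by (simp add: P_def)
  have vt_lp: "vt x r = netL (Ls (lp K r)) (x, r)" for x r
  proof -
    have "vt x r = (\<Sum>i=1..N. term3 (x, r) (ent (Ls (lp K r)) i))"
      unfolding vt_def a_def w_def b_def term3_alt by simp
    also have "\<dots> = netL (Ls (lp K r)) (x, r)" by (rule sum_ent[OF lenN[OF lpP]])
    finally show ?thesis .
  qed
  have err: "norm (v x r - vt x r) \<le> \<delta>" if r: "r \<in> {0<..<\<tau>}" "r \<notin> K" and x: "norm x \<le> R'" for x r
  proof -
    have pr: "lp K r \<in> P" "r \<in> {lp K r<..<rp \<tau> K (lp K r)}" using piece[OF r] by auto
    have "v x r = G (lp K r) x r" using G(2)[OF pr] by simp
    moreover have "(x, r) \<in> cball 0 R' \<times> {lp K r..rp \<tau> K (lp K r)}" using x pr by auto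
    ultimately show ?thesis using Ls[OF pr(1), of "(x, r)"] by (simp add: vt_lp)
  qed
  have pws: "piecewise_smooth_fun \<tau> (a i) \<and> piecewise_smooth_fun \<tau> (w i) \<and> piecewise_smooth_fun \<tau> (b i)" for i
  proof (intro conjI piecewise_affine[OF K])
    fix s t assume c: "consecutive \<tau> K s t"
    have lc: "lp K r = s" if "r \<in> {s<..<t}" for r using lp_const[OF K c that tau] .
    show "\<exists>u z. \<forall>r\<in>{s<..<t}. a i r = r *\<^sub>R u + z"
      by (rule exI[of _ 0], rule exI[of _ "fst (ent (Ls s) i)"]) (simp add: a_def lc)
    show "\<exists>u z. \<forall>r\<in>{s<..<t}. w i r = r *\<^sub>R u + z"
      by (rule exI[of _ 0], rule exI[of _ "fst (fst (snd (ent (Ls s) i)))"]) (simp add: w_def lc)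
    show "\<exists>u z. \<forall>r\<in>{s<..<t}. b i r = r *\<^sub>R u + z"
      by (rule exI[of _ "snd (fst (snd (ent (Ls s) i)))"], rule exI[of _ "snd (snd (ent (Ls s) i))"])
         (simp add: b_def lc mult.commute)
  qed
  define Mv where "Mv = (\<Sum>s\<in>P. nA (Ls s))"
  define Lv where "Lv = (\<Sum>s\<in>P. nW (Ls s))"
  have Lv: "Lv \<ge> 0" unfolding Lv_def by (intro sum_nonneg nW_nonneg)
  have vtb: "norm (vt x r) \<le> Mv" for x r
  proof -
    have "norm (vt x r) \<le> nA (Ls (lp K r))" unfolding vt_lp by (rule netL_bound)
    also have "\<dots> \<le> Mv" unfolding Mv_def using finP lpP[of r] by (intro member_le_sum nA_nonneg) auto
    finally show ?thesis .
  qed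
  have vtl: "norm (vt x r - vt y r) \<le> Lv * norm (x - y)" for x y r
  proof -
    have "norm (vt x r - vt y r) \<le> nW (Ls (lp K r)) * norm ((x, r) - (y, r))" unfolding vt_lp by (rule netL_lip)
    also have "\<dots> = nW (Ls (lp K r)) * norm (x - y)" by (simp add: norm_Pair)
    also have "\<dots> \<le> Lv * norm (x - y)" unfolding Lv_def using finP lpP[of r]
      by (intro mult_right_mono member_le_sum nW_nonneg) auto
    finally show ?thesis .
  qed
  have vt_int: "(\<lambda>r. vt (y r) r) integrable_on {0..\<tau>}" if cy: "continuous_on {0..\<tau>} y" for y
  proof -
    define S where "S = {0<..<\<tau>} - K"
    have oS: "open S" unfolding S_def using K by (intro open_Diff finite_imp_closed) auto
    have bS: "bounded S" unfolding S_def by (rule bounded_subset[of "{0..\<tau>}"]) auto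
    have lS: "S \<in> lmeasurable" by (rule lmeasurable_open[OF bS oS])
    have cS: "continuous_on S (\<lambda>r. vt (y r) r)"
    proof (rule continuous_at_imp_continuous_on, rule ballI)
      fix r assume r: "r \<in> S"
      then have r': "r \<in> {0<..<\<tau>}" "r \<notin> K" by (auto simp: S_def)
      define s where "s = lp K r"
      have pr: "s \<in> P" "r \<in> {s<..<rp \<tau> K s}" using piece[OF r'] by (auto simp: s_def)
      have yc: "isCont y r" using continuous_on_interior[OF cy] r' by auto
      have c1: "isCont (\<lambda>r. (y r, r)) r" by (intro continuous_intros yc)
      have c2: "isCont (netL (Ls s)) (y r, r)"
        using netL_cont[of "Ls s"] by (simp add: continuous_on_eq_continuous_at)
      have "isCont (\<lambda>r. netL (Ls s) (y r, r)) r" using isCont_o2[OF c1 c2] .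
      then have "continuous (at r within UNIV) (\<lambda>r. netL (Ls s) (y r, r))" by simp
      then have "continuous (at r within UNIV) (\<lambda>r. vt (y r) r)"
      proof (rule continuous_transform_within_openin)
        show "openin (top_of_set UNIV) {s<..<rp \<tau> K s}" by auto
        show "r \<in> {s<..<rp \<tau> K s}" using pr by auto
        fix r' assume "r' \<in> {s<..<rp \<tau> K s}"
        then show "netL (Ls s) (y r', r') = vt (y r') r'" using lpc[OF pr(1)] by (simp add: vt_lp)
      qed
      then show "isCont (\<lambda>r. vt (y r) r) r" by simp
    qed
    have "(\<lambda>r. vt (y r) r) integrable_on S"
      by (rule measurable_bounded_by_integrable_imp_integrable[OF continuous_imp_measurable_on_sets_lebesgue[OF cS]
            integrable_on_const[OF lS]]) (use vtb lS in \<open>auto intro: fmeasurableD\<close>)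
    then show ?thesis
    proof (rule integrable_spike_set)
      show "negligible {x \<in> S - {0..\<tau>}. vt (y x) x \<noteq> 0}" by (rule negligible_subset[of "{}"]) (auto simp: S_def)
      show "negligible {x \<in> {0..\<tau>} - S. vt (y x) x \<noteq> 0}"
        by (rule negligible_subset[OF negligible_finite[OF finE]]) (auto simp: S_def E_def)
    qed
  qed
  have "\<forall>x0. \<exists>y. continuous_on {0..\<tau>} y \<and> (\<forall>t\<in>{0..\<tau>}. ((\<lambda>s. vt (y s) s) has_integral (y t - x0)) {0..t})"
  proof
    fix x0
    show "\<exists>y. continuous_on {0..\<tau>} y \<and> (\<forall>t\<in>{0..\<tau>}. ((\<lambda>s. vt (y s) s) has_integral (y t - x0)) {0..t})"
      by (rule picard[OF _ Lv vtb vtl vt_int]) (use tau in auto)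
  qed
  then obtain Y where Y: "\<And>x0. continuous_on {0..\<tau>} (Y x0)"
    "\<And>x0 t. t \<in> {0..\<tau>} \<Longrightarrow> ((\<lambda>s. vt (Y x0 s) s) has_integral (Y x0 t - x0)) {0..t}"
    by metis
  have ex: "is_flow \<tau> vt (\<lambda>t x0. Y x0 t)"
    unfolding is_flow_def using Y by auto
  have cmp: "norm (\<phi> t x0 - \<psi> t x0) < \<epsilon>" if psi: "is_flow \<tau> vt \<psi>" and x0: "x0 \<in> \<Omega>" and t: "t \<in> {0..\<tau>}" for \<psi> t x0
  proof -
    have psi_c: "continuous_on {0..\<tau>} (\<lambda>t. \<psi> t x0)" using psi unfolding is_flow_def by blast
    have psi_i: "((\<lambda>s. vt (\<psi> s x0) s) has_integral (\<psi> t x0 - x0)) {0..t}" if "t \<in> {0..\<tau>}" for t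
      using psi that unfolding is_flow_def by blast
    define u where "u t = norm (\<phi> t x0 - \<psi> t x0)" for t
    have cu: "continuous_on {0..\<tau>} u" unfolding u_def by (intro continuous_intros phi_c psi_c)
    have key: "u t \<le> \<delta> * \<tau> + L * integral {0..t} u"
      if t1: "t1 \<le> \<tau>" and lt: "\<And>r. r \<in> {0..<t1} \<Longrightarrow> u r < \<epsilon>" and t: "t \<in> {0..t1}" for t t1
    proof -
      have tt: "t \<in> {0..\<tau>}" using t t1 by auto
      have ui: "u integrable_on {0..t}"
        using tt by (intro integrable_continuous_interval continuous_on_subset[OF cu]) auto
      have Lui: "(\<lambda>r. L * u r) integrable_on {0..t}" using integrable_on_cmult_left[OF ui, of L] by simp
      have gi: "(\<lambda>r. L * u r + \<delta>) integrable_on {0..t}" using Lui by (intro integrable_add integrable_const_ivl)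
      have fi: "((\<lambda>s. v (\<phi> s x0) s - vt (\<psi> s x0) s) has_integral (\<phi> t x0 - \<psi> t x0)) {0..t}"
        using has_integral_diff[OF phi_i[OF tt, of x0] psi_i[OF tt]] by simp
      have "u t = norm (integral {0..t} (\<lambda>s. v (\<phi> s x0) s - vt (\<psi> s x0) s))"
        unfolding u_def using integral_unique[OF fi] by simp
      also have "\<dots> \<le> integral {0..t} (\<lambda>r. L * u r + \<delta>)"
      proof (rule norm_integral_bound_finite[OF _ gi])
        show "(\<lambda>s. v (\<phi> s x0) s - vt (\<psi> s x0) s) integrable_on {0..t}" using fi by blast
        show "finite (insert t1 E)" using finE by simp
        fix r assume r: "r \<in> {0..t} - insert t1 E"
        have rE: "r \<in> {0..t} - E" using r by auto
        have "t \<le> \<tau>" using tt by auto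
        then have r': "r \<in> {0<..<\<tau>}" "r \<notin> K" using Eout[OF rE] by auto
        have rt1: "r \<in> {0..<t1}" using r t by auto
        have rtau: "r \<in> {0..\<tau>}" using r tt by auto
        have "norm (\<psi> r x0) \<le> norm (\<phi> r x0) + norm (\<phi> r x0 - \<psi> r x0)"
          using norm_triangle_ineq4[of "\<phi> r x0" "\<phi> r x0 - \<psi> r x0"] by simp
        also have "\<dots> \<le> R + \<epsilon>" using trajR[OF x0 rtau] lt[OF rt1] unfolding u_def by simp
        finally have psR: "norm (\<psi> r x0) \<le> R'" unfolding R'_def .
        have "v (\<phi> r x0) r - vt (\<psi> r x0) r = (v (\<phi> r x0) r - v (\<psi> r x0) r) + (v (\<psi> r x0) r - vt (\<psi> r x0) r)"
          by simp
        then have "norm (v (\<phi> r x0) r - vt (\<psi> r x0) r) \<le> norm (v (\<phi> r x0) r - v (\<psi> r x0) r) + norm (v (\<psi> r x0) r - vt (\<psi> r x0) r)"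
          by (metis norm_triangle_ineq)
        also have "\<dots> \<le> L * u r + \<delta>"
          unfolding u_def using lipv[OF r'(1)] err[OF r' psR] by (intro add_mono) auto
        finally show "norm (v (\<phi> r x0) r - vt (\<psi> r x0) r) \<le> L * u r + \<delta>" .
      qed
      also have "\<dots> = L * integral {0..t} u + \<delta> * t"
        using tt by (simp add: integral_add[OF Lui integrable_const_ivl] integral_mult_right mult.commute)
      also have "\<dots> \<le> \<delta> * \<tau> + L * integral {0..t} u"
        using tt \<delta> by (simp add: mult_left_mono)
      finally show ?thesis .
    qed
    show ?thesis
    proof (rule ccontr)
      assume "\<not> norm (\<phi> t x0 - \<psi> t x0) < \<epsilon>"
      then have ut: "\<epsilon> \<le> u t" by (simp add: u_def)
      define S' where "S' = {0..\<tau>} \<inter> u -` {\<epsilon>..}"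
      have tS: "t \<in> S'" using t ut by (simp add: S'_def)
      have clS: "closed S'" unfolding S'_def by (rule continuous_closed_preimage[OF cu]) auto
      have bS: "bdd_below S'" unfolding S'_def by (rule bdd_belowI[of _ 0]) auto
      define t1 where "t1 = Inf S'"
      have t1S: "t1 \<in> S'" unfolding t1_def using closed_contains_Inf[OF _ bS clS] tS by auto
      then have t1: "t1 \<in> {0..\<tau>}" "\<epsilon> \<le> u t1" by (auto simp: S'_def)
      have lt: "u r < \<epsilon>" if "r \<in> {0..<t1}" for r
      proof (rule ccontr)
        assume "\<not> u r < \<epsilon>"
        then have "r \<in> S'" using that t1 by (auto simp: S'_def)
        then have "t1 \<le> r" unfolding t1_def using bS by (rule cInf_lower)
        then show False using that by auto
      qed
      have "u t1 \<le> (\<delta> * \<tau>) * exp (L * t1)"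
      proof (rule gronwall[of t1 u L "\<delta> * \<tau>" t1])
        show "0 \<le> t1" using t1 by auto
        show "continuous_on {0..t1} u" using t1 by (intro continuous_on_subset[OF cu]) auto
        show "0 \<le> L" by (rule L)
        show "t1 \<in> {0..t1}" using t1 by auto
        fix s assume s: "s \<in> {0..t1}"
        have t1t: "t1 \<le> \<tau>" using t1 by auto
        show "u s \<le> \<delta> * \<tau> + L * integral {0..s} u"
          by (rule key[OF t1t lt s])
      qed
      also have "\<dots> \<le> \<delta> * \<tau> * exp (L * \<tau>)"
        using t1 \<delta> tau L by (intro mult_left_mono) (auto intro: mult_left_mono)
      also have "\<dots> < \<epsilon>" by (rule \<delta>b)
      finally show False using t1 by simp
    qed
  qed
  have main: "(\<exists>\<psi>. is_flow \<tau> vt \<psi>) \<and> (\<forall>\<psi>. is_flow \<tau> vt \<psi> \<longrightarrow> (\<forall>x\<in>\<Omega>. \<forall>t\<in>{0..\<tau>}. norm (\<phi> t x - \<psi> t x) \<le> \<epsilon>))"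
    proof (intro conjI allI impI ballI)
    show "\<exists>\<psi>. is_flow \<tau> vt \<psi>" using ex by blast
    fix \<psi> x t assume "is_flow \<tau> vt \<psi>" "x \<in> \<Omega>" "t \<in> {0..\<tau>}"
    then show "norm (\<phi> t x - \<psi> t x) \<le> \<epsilon>" using cmp less_imp_le by blast
  qed
  have pw: "\<forall>i\<in>{1..N}. piecewise_smooth_fun \<tau> (a i) \<and> piecewise_smooth_fun \<tau> (w i) \<and> piecewise_smooth_fun \<tau> (b i)"
    using pws by blast
  have lt: "let vt = \<lambda>x t. \<Sum>i = 1..N. tanh (w i t \<bullet> x + b i t) *\<^sub>R a i t
     in (\<exists>\<psi>. is_flow \<tau> vt \<psi>) \<and> (\<forall>\<psi>. is_flow \<tau> vt \<psi> \<longrightarrow> (\<forall>x\<in>\<Omega>. \<forall>t\<in>{0..\<tau>}. norm (\<phi> t x - \<psi> t x) \<le> \<epsilon>))"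
    using main unfolding vt_def Let_def .
  have N: "0 < N" by (simp add: N_def)
  show ?thesis
    apply (rule exI[of _ N])
    apply (rule conjI[OF N])
    apply (rule exI[of _ a], rule exI[of _ w], rule exI[of _ b])
    apply (rule conjI[OF pw lt])
    done
qed

end
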